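(* Let $\mathcal{C}$ be a unital complex algebra, $A,B\subseteq\mathcal{C}$ subalgebras with $\mathbf{1}_{\mathcal{C}}\in B$, $\rho:A\to B$ and $\psi:B\to A$ linear maps, and $\mathfrak{e}:\mathcal{C}\to\mathcal{C}$ a linear map such that $(A,B)$ is right-liberated with respect to $(\mathfrak{e},\rho,\psi)$. Then for every $\ell\ge0$ and every $x=(b_0,a_1,b_1,\dots,a_\ell,b_\ell)\in\mathcal{W}_\ell$, \[ \mathfrak{e}\big[b_0a_1b_1\cdots a_\ell b_\ell\big]=\mathcal{M}(x)\,\mathfrak{e}[\mathbf{1}]. \]
   Context: $(A,B)$ is right-liberated with respect to $(\mathfrak e,\rho,\psi)$ if $\mathfrak e$ is a $B$-bimodule map ($\mathfrak e[b_1yb_2]=b_1\mathfrak e[y]b_2$ for $b_1,b_2\in B$, $y\in\mathcal C$) and for every $n\ge1$, $a_1,\dots,a_n\in A$, $b_1,\dots,b_{n-1}\in B$: $\mathfrak e\big[(a_1-\rho(a_1))(b_1-\psi(b_1))(a_2-\rho(a_2))\cdots(b_{n-1}-\psi(b_{n-1}))(a_n-\rho(a_n))\big]=0.$ Moment function: $\mathcal W_\ell$ is the set of tuples $(b_0,a_1,b_1,\dots,a_\ell,b_\ell)$ with $a_i\in A$, $b_i\in B$ (so $\mathcal W_0=B$). For $m\ge1$ let $[m]=\{1,\dots,m\}$, $2[m]=\{2,4,\dots,2m\}$, $2[0]=\emptyset$. For $\ell\ge1$ and $S\subseteq[2\ell-1]$, let $T_0,\dots,T_m$ be the maximal runs of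 consecutive integers in $S\cup\{0,2\ell\}$ and $U_1,\dots,U_m$ the maximal runs of consecutive integers in $[2\ell-1]\setminus S$, listed so that $T_0<U_1<T_1<\dots<U_m<T_m$; $m=:\mathrm{Alt}(S)$. For $w=(b_0,a_1,\dots,a_\ell,b_\ell)$ set, for $j\in S\cup\{0,2\ell\}$, $x_j=\rho(a_{(j+1)/2})$ if $j$ odd, $x_j=b_{j/2}$ if $j$ even; and for $k\in[2\ell-1]\setminus S$, $y_k=a_{(k+1)/2}$ if $k$ odd, $y_k=\psi(b_{k/2})$ if $k$ even. Define $\mathrm{Col}(w;S)=\big(\prod_{j\in T_0}x_j,\prod_{k\in U_1}y_k,\prod_{j\in T_1}x_j,\dots,\prod_{k\in U_m}y_k,\prod_{j\in T_m}x_j\big)\in\mathcal W_{m}$, products taken in increasing order of index. Define $\mathcal M:\bigcup_\ell\mathcal W_\ell\to B$ recursively by $\mathcal M(b)=b$ for $b\in\mathcal W_0$ and, for $x\in\mathcal W_\ell$, $\ell\ge1$, $\mathcal M(x)=\sum_{S\subseteq[2\ell-1],\,S\neq 2[\ell-1]}(-1)^{\ell+|S|}\mathcal M(\mathrm{Col}(x;S))$ (each such $S$ has $\mathrm{Alt}(S)<\ell$). *)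

theory Defs
  imports Main "HOL.Complex"
begin

definition complex_algebra :: "(complex \<Rightarrow> 'c::ring_1 \<Rightarrow> 'c) \<Rightarrow> bool" where
  "complex_algebra sc \<longleftrightarrow> module sc \<and>
     (\<forall>c x y. sc c (x * y) = sc c x * y) \<and> (\<forall>c x y. sc c (x * y) = x * sc c y)"

definition subalgebra :: "(complex \<Rightarrow> 'c::ring_1 \<Rightarrow> 'c) \<Rightarrow> 'c set \<Rightarrow> bool" where
  "subalgebra sc A \<longleftrightarrow> 0 \<in> A \<and> (\<forall>x\<in>A. \<forall>y\<in>A. x + y \<in> A \<and> x * y \<in> A)
     \<and> (\<forall>c. \<forall>x\<in>A. sc c x \<in> A)"

definition linear_on :: "(complex \<Rightarrow> 'c::ring_1 \<Rightarrow> 'c) \<Rightarrow> 'c set \<Rightarrow> ('c \<Rightarrow> 'c) \<Rightarrow> bool" where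
  "linear_on sc A f \<longleftrightarrow> (\<forall>x\<in>A. \<forall>y\<in>A. f (x + y) = f x + f y) \<and> (\<forall>c. \<forall>x\<in>A. f (sc c x) = sc c (f x))"

definition right_liberated ::
  "'c::ring_1 set \<Rightarrow> 'c set \<Rightarrow> ('c \<Rightarrow> 'c) \<Rightarrow> ('c \<Rightarrow> 'c) \<Rightarrow> ('c \<Rightarrow> 'c) \<Rightarrow> bool" where
  "right_liberated A B e \<rho> \<psi> \<longleftrightarrow>
     (\<forall>b1\<in>B. \<forall>b2\<in>B. \<forall>y. e (b1 * y * b2) = b1 * e y * b2) \<and>
     (\<forall>n\<ge>1. \<forall>a b :: nat \<Rightarrow> 'c.
        (\<forall>i\<in>{1..n}. a i \<in> A) \<longrightarrow> (\<forall>i\<in>{1..n-1}. b i \<in> B) \<longrightarrow>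
        e (prod_list (map (\<lambda>j. if odd j then a ((j+1) div 2) - \<rho> (a ((j+1) div 2))
                                 else b (j div 2) - \<psi> (b (j div 2))) [1..<2*n])) = 0)"

(* Words in W_l are lists w of length 2l+1: w!(2i) = b_i, w!(2i-1) = a_i. *)

fun runs :: "('a \<Rightarrow> bool) \<Rightarrow> 'a list \<Rightarrow> 'a list list" where
  "runs P [] = []"
| "runs P (x # xs) = (case runs P xs of [] \<Rightarrow> [[x]]
     | r # rs \<Rightarrow> if P (hd r) = P x then (x # r) # rs else [x] # r # rs)"

definition Col :: "('c::ring_1 \<Rightarrow> 'c) \<Rightarrow> ('c \<Rightarrow> 'c) \<Rightarrow> 'c list \<Rightarrow> nat set \<Rightarrow> 'c list" where
  "Col \<rho> \<psi> w S =
    (let l = length w div 2; Sig = S \<union> {0, 2*l};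
         val = (\<lambda>k. if k \<in> Sig then (if odd k then \<rho> (w ! k) else w ! k)
                    else (if odd k then w ! k else \<psi> (w ! k)))
     in map (\<lambda>blk. prod_list (map val blk)) (runs (\<lambda>k. k \<in> Sig) [0..<2*l+1]))"

(* recursion with fuel; fuel length w suffices since Alt(S) < l for all admissible S *)
primrec Maux :: "nat \<Rightarrow> ('c::ring_1 \<Rightarrow> 'c) \<Rightarrow> ('c \<Rightarrow> 'c) \<Rightarrow> 'c list \<Rightarrow> 'c" where
  "Maux 0 \<rho> \<psi> w = w ! 0"
| "Maux (Suc k) \<rho> \<psi> w =
    (if length w \<le> 1 then w ! 0 else
      (let l = length w div 2 in
        \<Sum>S \<in> {S. S \<subseteq> {1..2*l-1} \<and> S \<noteq> {2*i | i. i \<in> {1..l-1}}}.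
          (-1) ^ (l + card S) * Maux k \<rho> \<psi> (Col \<rho> \<psi> w S)))"

definition moment :: "('c::ring_1 \<Rightarrow> 'c) \<Rightarrow> ('c \<Rightarrow> 'c) \<Rightarrow> 'c list \<Rightarrow> 'c" where
  "moment \<rho> \<psi> w = Maux (length w) \<rho> \<psi> w"

end

theory Submission
  imports Defs
begin


lemma runs_concat: "concat (runs P xs) = xs"
  by (induction xs) (auto split: list.splits)

lemma runs_nonempty: "r \<in> set (runs P xs) \<Longrightarrow> r \<noteq> []"
  by (induction xs arbitrary: r) (auto split: list.splits if_splits)

lemma runs_Nil_iff: "runs P xs = [] \<longleftrightarrow> xs = []"
  by (cases xs) (auto split: list.splits)

lemma runs_hd: "xs \<noteq> [] \<Longrightarrow> hd (hd (runs P xs)) = hd xs"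
  by (induction xs) (auto split: list.splits)

lemma runs_block: "r \<in> set (runs P xs) \<Longrightarrow> y \<in> set r \<Longrightarrow> P y = P (hd r)"
proof (induction xs arbitrary: r)
  case Nil then show ?case by simp
next
  case (Cons x xs)
  show ?case
  proof (cases "runs P xs")
    case Nil then show ?thesis using Cons.prems by simp
  next
    case (Cons r' rs)
    then show ?thesis using Cons.prems Cons.IH
      by (auto split: if_splits) (metis list.set_intros(1))+
  qed
qed

lemma runs_parity: "i < length (runs P xs) \<Longrightarrow>
   P (hd (runs P xs ! i)) = (if even i then P (hd (hd (runs P xs))) else \<not> P (hd (hd (runs P xs))))"
proof (induction xs arbitrary: i)
  case Nil then show ?case by simp
next
  case (Cons x xs)
  show ?case
  proof (cases "runs P xs")
    case Nil then show ?thesis using Cons.prems by simp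
  next
    case (Cons r rs)
    note IH = Cons.IH
    show ?thesis
    proof (cases "P (hd r) = P x")
      case True
      then show ?thesis using Cons.prems IH[of i] Cons
        by (cases i) auto
    next
      case False
      show ?thesis
      proof (cases i)
        case 0 then show ?thesis using False Cons by simp
      next
        case (Suc j)
        then show ?thesis using False Cons Cons.prems IH[of j] by auto
      qed
    qed
  qed
qed

lemma runs_length: "length (runs P xs) \<le> length xs"
  by (induction xs) (auto split: list.splits)

lemma runs_length_eq: "length (runs P xs) = length xs \<Longrightarrow> runs P xs = map (\<lambda>x. [x]) xs"
proof (induction xs)
  case Nil then show ?case by simp
next
  case (Cons x xs)
  show ?case
  proof (cases "runs P xs")
    case Nil then show ?thesis using Cons.prems by (simp add: runs_Nil_iff)
  next
    case (Cons r rs)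
    then show ?thesis using Cons.prems Cons.IH runs_length[of P xs]
      by (auto split: if_splits)
  qed
qed



lemma neg1_comm: "(-1::'a::ring_1)^n * y = y * (-1)^n"
  by (cases "even n") auto

lemma L1: "(-1::'a::ring_1)^n * (v * P) + (-1)^(Suc n) * (u*P) = (v - u) * ((-1)^n * P)"
  by (cases "even n") (auto simp: algebra_simps)
lemma L2: "(-1::'a::ring_1)^(Suc n) * (v * P) + (-1)^n * (u*P) = (u - v) * ((-1)^n * P)"
  by (cases "even n") (auto simp: algebra_simps)

lemma expand:
  fixes u v :: "nat \<Rightarrow> 'c::ring_1"
  assumes "distinct xs"
  shows "prod_list (map (\<lambda>k. if k\<in>Od then v k - u k else u k - v k) xs) =
    (\<Sum>S\<in>Pow (set xs). (-1)^(card (S\<inter>Od) + card (set xs - S - Od)) *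
        prod_list (map (\<lambda>k. if k\<in>S then u k else v k) xs))"
  using assms
proof (induction xs)
  case Nil then show ?case by simp
next
  case (Cons x xs)
  let ?X = "set xs"
  let ?sg = "\<lambda>S. card (S\<inter>Od) + card (?X - S - Od)"
  let ?P = "\<lambda>S. prod_list (map (\<lambda>k. if k\<in>S then u k else v k) xs)"
  have xn: "x \<notin> ?X" using Cons by simp
  have fin: "finite ?X" by simp
  have P_ins: "?P (insert x S) = ?P S" for S
    using xn by (intro arg_cong[where f=prod_list] map_cong) auto
  have P_ins': "prod_list (map (\<lambda>k. if k = x \<or> k \<in> S then u k else v k) xs) = ?P S" for S
    using xn by (intro arg_cong[where f=prod_list] map_cong) auto
  have c1: "card (insert x S \<inter> Od) = card (S \<inter> Od) + (if x \<in> Od then 1 else 0)" if "S \<subseteq> ?X" for S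
  proof -
    have "finite S" using that finite_subset fin by blast
    moreover have "x \<notin> S" using that xn by blast
    ultimately show ?thesis by (auto simp: Int_insert_left)
  qed
  have c2: "card (insert x ?X - insert x S - Od) = card (?X - S - Od)" if "S \<subseteq> ?X" for S
    using xn by (metis Diff_insert2 Diff_insert_absorb insert_Diff_single)
  have c3: "card (insert x ?X - S - Od) = card (?X - S - Od) + (if x \<in> Od then 0 else 1)" if "S \<subseteq> ?X" for S
  proof -
    have "x \<notin> S" using that xn by blast
    then show ?thesis using xn fin by (auto simp: insert_Diff_if)
  qed
  have c4: "S \<inter> Od = S \<inter> Od" for S by simp
  have "(\<Sum>S\<in>Pow (set (x#xs)). (-1)^(card (S\<inter>Od) + card (set (x#xs) - S - Od)) *
        prod_list (map (\<lambda>k. if k\<in>S then u k else v k) (x#xs)))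
      = (\<Sum>S\<in>Pow ?X. (-1)^(card (S\<inter>Od) + card (insert x ?X - S - Od)) * (v x * ?P S))
        + (\<Sum>S\<in>insert x ` Pow ?X. (-1)^(card (S\<inter>Od) + card (insert x ?X - S - Od)) *
           prod_list (map (\<lambda>k. if k\<in>S then u k else v k) (x#xs)))"
  proof -
    have d: "Pow ?X \<inter> insert x ` Pow ?X = {}" using xn by auto
    have "(\<Sum>S\<in>Pow ?X. (-1)^(card (S\<inter>Od) + card (insert x ?X - S - Od)) *
           prod_list (map (\<lambda>k. if k\<in>S then u k else v k) (x#xs)))
        = (\<Sum>S\<in>Pow ?X. (-1)^(card (S\<inter>Od) + card (insert x ?X - S - Od)) * (v x * ?P S))"
    proof (rule sum.cong)
      fix S assume "S \<in> Pow ?X"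
      then have "x \<notin> S" using xn by blast
      then show "(-1)^(card (S\<inter>Od) + card (insert x ?X - S - Od)) *
           prod_list (map (\<lambda>k. if k\<in>S then u k else v k) (x#xs)) =
           (-1)^(card (S\<inter>Od) + card (insert x ?X - S - Od)) * (v x * ?P S)" by simp
    qed simp
    then show ?thesis
      by (simp add: Pow_insert sum.union_disjoint d)
  qed
  also have "(\<Sum>S\<in>insert x ` Pow ?X. (-1)^(card (S\<inter>Od) + card (insert x ?X - S - Od)) *
           prod_list (map (\<lambda>k. if k\<in>S then u k else v k) (x#xs)))
      = (\<Sum>S\<in>Pow ?X. (-1)^(card (insert x S\<inter>Od) + card (insert x ?X - insert x S - Od)) * (u x * ?P S))"
  proof -
    have inj: "inj_on (insert x) (Pow ?X)" using xn unfolding inj_on_def by (metis PowD insert_ident subsetD)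
    show ?thesis by (simp add: sum.reindex[OF inj] P_ins')
  qed
  also have "(\<Sum>S\<in>Pow ?X. (-1)^(card (S\<inter>Od) + card (insert x ?X - S - Od)) * (v x * ?P S))
     + (\<Sum>S\<in>Pow ?X. (-1)^(card (insert x S\<inter>Od) + card (insert x ?X - insert x S - Od)) * (u x * ?P S))
     = (\<Sum>S\<in>Pow ?X. (if x\<in>Od then v x - u x else u x - v x) * ((-1)^(?sg S) * ?P S))"
    unfolding sum.distrib[symmetric]
  proof (rule sum.cong)
    fix S assume "S \<in> Pow ?X"
    then have S: "S \<subseteq> ?X" by blast
    show "(-1)^(card (S\<inter>Od) + card (insert x ?X - S - Od)) * (v x * ?P S) +
      (-1)^(card (insert x S\<inter>Od) + card (insert x ?X - insert x S - Od)) * (u x * ?P S)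
      = (if x\<in>Od then v x - u x else u x - v x) * ((-1)^(?sg S) * ?P S)"
      unfolding c1[OF S] c2[OF S] c3[OF S]
      using L1[of "?sg S" "v x" "?P S" "u x"] L2[of "?sg S" "v x" "?P S" "u x"]
      by (cases "x \<in> Od") (simp_all add: ac_simps)
  qed simp
  also have "\<dots> = (if x\<in>Od then v x - u x else u x - v x) * prod_list (map (\<lambda>k. if k\<in>Od then v k - u k else u k - v k) xs)"
    using Cons by (simp add: sum_distrib_left)
  finally show ?case by simp
qed



lemma runs_last: "xs \<noteq> [] \<Longrightarrow> runs P xs \<noteq> [] \<and> last (last (runs P xs)) = last xs"
proof (induction xs)
  case Nil then show ?case by simp
next
  case (Cons x xs)
  then show ?case by (cases xs) (auto split: list.splits simp: runs_Nil_iff)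
qed

lemma prod_list_concat_map: "prod_list (map f (concat xss)) = prod_list (map (\<lambda>xs. prod_list (map f xs)) xss)"
  by (induction xss) auto

lemma prod_in_sub:
  assumes "\<forall>x\<in>B. \<forall>y\<in>B. x * y \<in> B" "1 \<in> B" "set xs \<subseteq> B"
  shows "prod_list xs \<in> B"
  using assms(3) by (induction xs) (auto simp: assms(1,2))

lemma prod_in_sub_ne:
  assumes "\<forall>x\<in>A. \<forall>y\<in>A. x * y \<in> A" "set xs \<subseteq> A" "xs \<noteq> []"
  shows "prod_list xs \<in> A"
  using assms(2,3)
proof (induction xs)
  case Nil then show ?case by simp
next
  case (Cons x xs)
  then show ?case using assms(1) by (cases xs) auto
qed

lemma Col_prod:
  assumes "length w = 2*l+1"
  shows "prod_list (Col \<rho> \<psi> w S) = prod_list (map (\<lambda>k. if k \<in> S \<union> {0, 2*l} then (if odd k then \<rho> (w ! k) else w ! k)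
                    else (if odd k then w ! k else \<psi> (w ! k))) [0..<2*l+1])"
proof -
  have l: "length w div 2 = l" using assms by simp
  show ?thesis unfolding Col_def Let_def l
    by (simp add: prod_list_concat_map[symmetric] runs_concat del: upt_Suc)
qed


declare upt_Suc[simp del]

lemma S0_eq: "{2*i | i. i \<in> {1..l-1}} = {k \<in> {1..<2*l::nat}. even k}"
  by (auto elim!: evenE)

lemma Col_wf:
  assumes len: "length w = 2*l+1" and l1: "l \<ge> 1" and S: "S \<subseteq> {1..<2*l}"
    and ne: "S \<noteq> {2*i | i. i \<in> {1..l-1}}"
    and wB: "\<forall>i\<le>l. w!(2*i) \<in> B" and wA: "\<forall>i\<in>{1..l}. w!(2*i-1) \<in> A"
    and rhoAB: "\<forall>x\<in>A. \<rho> x \<in> B" and psiBA: "\<forall>x\<in>B. \<psi> x \<in> A"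
    and Bm: "\<forall>x\<in>B. \<forall>y\<in>B. x*y \<in> B" and B1: "1 \<in> B" and Am: "\<forall>x\<in>A. \<forall>y\<in>A. x*y \<in> A"
  shows "\<exists>l'. length (Col \<rho> \<psi> w S) = 2*l'+1 \<and> l' < l \<and> (\<forall>i\<le>l'. Col \<rho> \<psi> w S ! (2*i) \<in> B)
           \<and> (\<forall>i\<in>{1..l'}. Col \<rho> \<psi> w S ! (2*i-1) \<in> A)"
proof -
  define Sig where "Sig = S \<union> {0, 2*l}"
  define P where "P = (\<lambda>k. k \<in> Sig)"
  define xs where "xs = [0..<2*l+1]"
  define rs where "rs = runs P xs"
  define val where "val = (\<lambda>k. if k \<in> Sig then (if odd k then \<rho> (w ! k) else w ! k)
                    else (if odd k then w ! k else \<psi> (w ! k)))"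
  have l: "length w div 2 = l" using len by simp
  have Col: "Col \<rho> \<psi> w S = map (\<lambda>blk. prod_list (map val blk)) rs"
    unfolding Col_def Let_def l rs_def P_def xs_def val_def Sig_def by simp
  have xsne: "xs \<noteq> []" unfolding xs_def by simp
  have hdxs: "hd xs = 0" unfolding xs_def by (simp add: hd_upt del: upt_Suc)
  have lastxs: "last xs = 2*l" unfolding xs_def by (simp add: last_upt)
  have hd0: "hd (hd rs) = 0" using runs_hd[OF xsne, of P] hdxs rs_def by simp
  have P0: "P 0" unfolding P_def Sig_def by simp
  have par: "(y \<in> Sig) = even i" if "i < length rs" "y \<in> set (rs ! i)" for i y
  proof -
    have "rs ! i \<in> set rs" using that by simp
    then have "P y = P (hd (rs ! i))" using runs_block that rs_def by metis
    also have "\<dots> = even i" using runs_parity[of i P xs] that hd0 P0 rs_def by simp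
    finally show ?thesis unfolding P_def .
  qed
  have elems: "y < 2*l+1" if "i < length rs" "y \<in> set (rs ! i)" for i y
  proof -
    have "y \<in> set (concat rs)" using that by auto
    then show ?thesis unfolding rs_def runs_concat xs_def by auto
  qed
  have nonempty: "rs ! i \<noteq> []" if "i < length rs" for i
    using runs_nonempty that rs_def nth_mem by metis
  have rsne: "rs \<noteq> []" using runs_Nil_iff xsne rs_def by metis
  have odd_len: "odd (length rs)"
  proof -
    have ll: "last rs = rs ! (length rs - 1)" using rsne by (simp add: last_conv_nth)
    have "last (last rs) = 2*l" using runs_last[OF xsne, of P] lastxs rs_def by simp
    moreover have "last rs \<noteq> []" using nonempty rsne ll by simp
    ultimately have "2*l \<in> set (rs ! (length rs - 1))" using ll last_in_set by metis
    then have "even (length rs - 1)" using par[of "length rs - 1" "2*l"] rsne Sig_def by simp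
    then show ?thesis using rsne by (cases "length rs") auto
  qed
  have le: "length rs \<le> 2*l+1" using runs_length[of P xs] rs_def xs_def by simp
  have neq: "length rs \<noteq> 2*l+1"
  proof
    assume eq: "length rs = 2*l+1"
    then have rsm: "rs = map (\<lambda>x. [x]) xs" using runs_length_eq[of P xs] rs_def xs_def by simp
    have H: "k \<in> Sig \<longleftrightarrow> even k" if "k < 2*l+1" for k
    proof -
      have "rs ! k = [k]" using rsm that xs_def by simp
      then show ?thesis using par[of k k] that eq by simp
    qed
    have "S = {k \<in> {1..<2*l}. even k}"
    proof (rule set_eqI)
      fix x
      show "x \<in> S \<longleftrightarrow> x \<in> {k \<in> {1..<2*l}. even k}"
      proof
        assume x: "x \<in> S" then have "x \<in> {1..<2*l}" using S by blast
        then show "x \<in> {k \<in> {1..<2*l}. even k}" using H[of x] x unfolding Sig_def by auto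
      next
        assume x: "x \<in> {k \<in> {1..<2*l}. even k}"
        then show "x \<in> S" using H[of x] unfolding Sig_def by auto
      qed
    qed
    then show False using ne S0_eq by metis
  qed
  obtain l' where l': "length rs = 2*l'+1" using odd_len oddE by metis
  have ll': "l' < l" using l' le neq odd_len by simp
  have wA': "w ! y \<in> A" if "odd y" "y < 2*l+1" for y
  proof -
    obtain i where i: "y = 2*i+1" using \<open>odd y\<close> oddE by metis
    then have "Suc i \<in> {1..l}" using that by simp
    then have "w!(2*Suc i - 1) \<in> A" using wA by blast
    moreover have "2*Suc i - 1 = y" using i by simp
    ultimately show ?thesis by simp
  qed
  have wB': "w ! y \<in> B" if "even y" "y < 2*l+1" for y
  proof -
    obtain i where i: "y = 2*i" using \<open>even y\<close> evenE by metis
    then show ?thesis using wB that by simp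
  qed
  have Bpart: "Col \<rho> \<psi> w S ! (2*i) \<in> B" if "i \<le> l'" for i
  proof -
    have il: "2*i < length rs" using that l' by simp
    have "set (map val (rs ! (2*i))) \<subseteq> B"
    proof
      fix z assume "z \<in> set (map val (rs ! (2*i)))"
      then obtain y where y: "y \<in> set (rs ! (2*i))" "z = val y" by auto
      have yS: "y \<in> Sig" using par[OF il y(1)] by simp
      have yl: "y < 2*l+1" using elems[OF il y(1)] .
      show "z \<in> B"
      proof (cases "odd y")
        case True
        then show ?thesis using y yS rhoAB wA'[OF True yl] unfolding val_def by simp
      next
        case False
        then show ?thesis using y yS wB'[OF _ yl] unfolding val_def by simp
      qed
    qed
    then show ?thesis using Col il prod_in_sub[OF Bm B1] by simp
  qed
  have Apart: "Col \<rho> \<psi> w S ! (2*i-1) \<in> A" if "i \<in> {1..l'}" for i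
  proof -
    have il: "2*i-1 < length rs" using that l' by auto
    have oi: "\<not> even (2*i-1)" using that by simp
    have "set (map val (rs ! (2*i-1))) \<subseteq> A"
    proof
      fix z assume "z \<in> set (map val (rs ! (2*i-1)))"
      then obtain y where y: "y \<in> set (rs ! (2*i-1))" "z = val y" by auto
      have yS: "y \<notin> Sig" using par[OF il y(1)] oi by simp
      have yl: "y < 2*l+1" using elems[OF il y(1)] .
      show "z \<in> A"
      proof (cases "odd y")
        case True
        then show ?thesis using y yS wA'[OF True yl] unfolding val_def by simp
      next
        case False
        then show ?thesis using y yS psiBA wB'[OF _ yl] unfolding val_def by simp
      qed
    qed
    moreover have "map val (rs ! (2*i-1)) \<noteq> []" using nonempty[OF il] by simp
    ultimately show ?thesis using Col il prod_in_sub_ne[OF Am] by simp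
  qed
  show ?thesis using Bpart Apart ll' l' Col by auto
qed


declare upt_Suc[simp del]

lemma sign_lemma:
  assumes S: "S \<subseteq> {1..<2*l}" and l1: "l \<ge> 1"
  shows "(-1::'a::ring_1)^(card (S \<inter> {k. odd k}) + card ({1..<2*l} - S - {k. odd k})) = - ((-1)^(l + card S))"
proof -
  let ?Od = "{k::nat. odd k}"
  let ?E = "{1..<2*l} - ?Od"
  have E: "?E = (\<lambda>i. 2*i) ` {1..l-1}" by (auto elim!: evenE)
  have cE: "card ?E = l - 1" unfolding E by (subst card_image) (auto simp: inj_on_def)
  have fS: "finite S" using S finite_subset by blast
  define a where "a = card (S \<inter> ?Od)"
  define c where "c = card (S - ?Od)"
  define d where "d = card ({1..<2*l} - S - ?Od)"
  have "card S = card ((S \<inter> ?Od) \<union> (S - ?Od))" by (metis Int_Diff_Un)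
  also have "\<dots> = a + c" unfolding a_def c_def using fS by (subst card_Un_disjoint) auto
  finally have cS: "card S = a + c" .
  have "card ?E = card ((S - ?Od) \<union> ({1..<2*l} - S - ?Od))"
    using S by (intro arg_cong[where f=card]) auto
  also have "\<dots> = c + d" unfolding c_def d_def using fS by (subst card_Un_disjoint) auto
  finally have cd: "c + d = l - 1" using cE by simp
  have ex: "a + d + 2*c = card S + (l - 1)" using cS cd by simp
  have "(-1::'a)^(a + d) = (-1)^(a + d + 2*c)" by (simp add: power_add power_mult)
  also have "\<dots> = (-1)^(card S + (l - 1))" using ex by simp
  finally have 1: "(-1::'a)^(a + d) = (-1)^(card S + (l - 1))" .
  have e: "l + card S = Suc (card S + (l - 1))" using l1 by simp
  have "(-1::'a)^(l + card S) = - ((-1)^(card S + (l - 1)))" unfolding e power_Suc by simp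
  then show ?thesis using 1 unfolding a_def d_def by simp
qed

lemma upt_split: "l \<ge> 1 \<Longrightarrow> [0..<2*l+1] = 0 # [1..<2*l] @ [2*l]"
proof -
  assume l: "l \<ge> 1"
  have "[0..<2*l+1] = [0..<2*l] @ [2*l]" using upt_Suc_append[of 0 "2*l"] by simp
  moreover have "[0..<2*l] = 0 # [1..<2*l]" using l upt_conv_Cons[of 0 "2*l"] by simp
  ultimately show ?thesis by simp
qed


declare upt_Suc[simp del]

theorem theorem2p6:
  fixes sc :: "complex \<Rightarrow> 'c::ring_1 \<Rightarrow> 'c"
    and A B :: "'c set" and \<rho> \<psi> e :: "'c \<Rightarrow> 'c"
    and l :: nat and w :: "'c list"
  assumes "complex_algebra sc"
    and "subalgebra sc A" and "subalgebra sc B" and "1 \<in> B"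
    and "\<forall>x\<in>A. \<rho> x \<in> B" and "linear_on sc A \<rho>"
    and "\<forall>x\<in>B. \<psi> x \<in> A" and "linear_on sc B \<psi>"
    and "Vector_Spaces.linear sc sc e"
    and "right_liberated A B e \<rho> \<psi>"
    and "length w = 2 * l + 1"
    and "\<forall>i\<le>l. w ! (2*i) \<in> B"
    and "\<forall>i\<in>{1..l}. w ! (2*i - 1) \<in> A"
  shows "e (prod_list w) = moment \<rho> \<psi> w * e 1"
proof -
  interpret L: Vector_Spaces.linear sc sc e by fact
  note B1 = \<open>1 \<in> B\<close>
  note rhoAB = \<open>\<forall>x\<in>A. \<rho> x \<in> B\<close> and psiBA = \<open>\<forall>x\<in>B. \<psi> x \<in> A\<close>
  have Am: "\<forall>x\<in>A. \<forall>y\<in>A. x*y \<in> A" using \<open>subalgebra sc A\<close> unfolding subalgebra_def by blast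
  have Bm: "\<forall>x\<in>B. \<forall>y\<in>B. x*y \<in> B" using \<open>subalgebra sc B\<close> unfolding subalgebra_def by blast
  have eB: "\<And>b1 b2 y. b1 \<in> B \<Longrightarrow> b2 \<in> B \<Longrightarrow> e (b1 * y * b2) = b1 * e y * b2"
    using \<open>right_liberated A B e \<rho> \<psi>\<close> unfolding right_liberated_def by blast
  have lib: "\<And>n a b. n \<ge> 1 \<Longrightarrow> (\<forall>i\<in>{1..n}. a i \<in> A) \<Longrightarrow> (\<forall>i\<in>{1..n-1}. b i \<in> B) \<Longrightarrow>
        e (prod_list (map (\<lambda>j. if odd j then a ((j+1) div 2) - \<rho> (a ((j+1) div 2))
                                 else b (j div 2) - \<psi> (b (j div 2))) [1..<2*n])) = 0"
    using \<open>right_liberated A B e \<rho> \<psi>\<close> unfolding right_liberated_def by blast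
  have eneg1: "e ((-1)^n * x) = (-1)^n * e x" for n x
    by (cases "even n") (auto simp: L.neg)
  have main: "\<forall>w l. length w = 2*l+1 \<longrightarrow> length w \<le> k \<longrightarrow> (\<forall>i\<le>l. w!(2*i) \<in> B) \<longrightarrow>
      (\<forall>i\<in>{1..l}. w!(2*i-1) \<in> A) \<longrightarrow> e (prod_list w) = Maux k \<rho> \<psi> w * e 1" for k
  proof (induction k)
    case 0 then show ?case by simp
  next
    case (Suc k)
    show ?case
    proof (intro allI impI)
      fix w l
      assume len: "length w = 2*l+1" and lk: "length w \<le> Suc k"
        and wB: "\<forall>i\<le>l. w!(2*i) \<in> B" and wA: "\<forall>i\<in>{1..l}. w!(2*i-1) \<in> A"
      show "e (prod_list w) = Maux (Suc k) \<rho> \<psi> w * e 1"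
      proof (cases "l = 0")
        case True
        then obtain b where w: "w = [b]" using len by (cases w) auto
        have b: "b \<in> B" using wB w by auto
        have "e (b * 1 * 1) = b * e 1 * 1" using eB[OF b B1] by blast
        then have "e b = b * e 1" by simp
        then show ?thesis using w by simp
      next
        case False
        then have l1: "l \<ge> 1" by simp

        define X where "X = {1..<2*l}"
        define Od where "Od = {k::nat. odd k}"
        define S0 where "S0 = {2*i | i. i \<in> {1..l-1}}"
        define u where "u = (\<lambda>k. if odd k then \<rho> (w!k) else w!k)"
        define v where "v = (\<lambda>k. if odd k then w!k else \<psi> (w!k))"
        define cf where "cf = (\<lambda>k. if k\<in>Od then v k - u k else u k - v k)"
        define sg where "sg = (\<lambda>S. card (S \<inter> Od) + card (X - S - Od))"
        define PS where "PS = (\<lambda>S. prod_list (map (\<lambda>k. if k\<in>S then u k else v k) [1..<2*l]))"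
        define T where "T = (\<lambda>S. (-1)^(sg S) * e (prod_list (Col \<rho> \<psi> w S)))"
        have finX: "finite (Pow X)" unfolding X_def by simp
        have S0X: "S0 = {k \<in> X. even k}" unfolding S0_def X_def by (rule S0_eq)
        have S0P: "S0 \<in> Pow X" using S0X by auto
        have w0: "w!0 \<in> B" using wB by (metis le0 mult_0_right)
        have wl: "w!(2*l) \<in> B" using wB by simp
        have exp: "prod_list (map cf [1..<2*l]) = (\<Sum>S\<in>Pow X. (-1)^(sg S) * PS S)"
          unfolding cf_def sg_def PS_def X_def using expand[of "[1..<2*l]" Od v u] by simp
        have libw: "e (prod_list (map cf [1..<2*l])) = 0"
        proof -
          have f1: "e (prod_list (map (\<lambda>j. if odd j then w!(2*((j+1) div 2) - 1) - \<rho> (w!(2*((j+1) div 2) - 1))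
                                 else w!(2*(j div 2)) - \<psi> (w!(2*(j div 2)))) [1..<2*l])) = 0"
          proof -
            have "\<forall>i\<in>{1..l-1}. w!(2*i) \<in> B" using wB by auto
            then show ?thesis using lib[of l "\<lambda>i. w!(2*i-1)" "\<lambda>i. w!(2*i)"] l1 wA by blast
          qed
          have f2: "map (\<lambda>j. if odd j then w!(2*((j+1) div 2) - 1) - \<rho> (w!(2*((j+1) div 2) - 1))
                                 else w!(2*(j div 2)) - \<psi> (w!(2*(j div 2)))) [1..<2*l] = map cf [1..<2*l]"
          proof (rule map_cong[OF refl])
            fix j assume "j \<in> set [1..<2*l]"
            show "(if odd j then w!(2*((j+1) div 2) - 1) - \<rho> (w!(2*((j+1) div 2) - 1))
                                 else w!(2*(j div 2)) - \<psi> (w!(2*(j div 2)))) = cf j"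
            proof (cases "odd j")
              case True
              then have "2*((j+1) div 2) - 1 = j" by (auto elim!: oddE)
              then show ?thesis using True unfolding cf_def Od_def u_def v_def by simp
            next
              case False
              then have "2*(j div 2) = j" by (auto elim!: evenE)
              then show ?thesis using False unfolding cf_def Od_def u_def v_def by simp
            qed
          qed
          show ?thesis using f1 unfolding f2 .
        qed
        have zero: "e (w!0 * prod_list (map cf [1..<2*l]) * w!(2*l)) = 0"
          using eB[OF w0 wl] libw by simp
        have val_eq: "prod_list (Col \<rho> \<psi> w S) = w!0 * PS S * w!(2*l)" if "S \<in> Pow X" for S
        proof -
          let ?val = "\<lambda>k. if k \<in> S \<union> {0, 2*l} then (if odd k then \<rho> (w ! k) else w ! k)
                    else (if odd k then w ! k else \<psi> (w ! k))"
          have "map ?val [1..<2*l] = map (\<lambda>k. if k\<in>S then u k else v k) [1..<2*l]"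
            by (rule map_cong[OF refl]) (auto simp: u_def v_def)
          note m = this
          have sp: "prod_list (map ?val [0..<2*l+1]) = ?val 0 * prod_list (map ?val [1..<2*l]) * ?val (2*l)"
            unfolding upt_split[OF l1] by (simp add: mult.assoc)
          have v0: "?val 0 = w!0" and v2: "?val (2*l) = w!(2*l)" by simp_all
          show ?thesis unfolding Col_prod[OF len] sp m v0 v2 PS_def ..
        qed
        have "0 = e (w!0 * (\<Sum>S\<in>Pow X. (-1)^(sg S) * PS S) * w!(2*l))" using zero exp by simp
        also have "w!0 * (\<Sum>S\<in>Pow X. (-1)^(sg S) * PS S) * w!(2*l) =
            (\<Sum>S\<in>Pow X. (-1)^(sg S) * prod_list (Col \<rho> \<psi> w S))"
          unfolding sum_distrib_left sum_distrib_right
        proof (rule sum.cong[OF refl])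
          fix S assume S: "S \<in> Pow X"
          have "w!0 * ((-1)^(sg S) * PS S) * w!(2*l) = ((-1)^(sg S) * w!0) * PS S * w!(2*l)"
            by (simp add: neg1_comm mult.assoc)
          then show "w!0 * ((-1)^(sg S) * PS S) * w!(2*l) = (-1)^(sg S) * prod_list (Col \<rho> \<psi> w S)"
            using val_eq[OF S] by (simp add: mult.assoc)
        qed
        also have "e \<dots> = (\<Sum>S\<in>Pow X. T S)" unfolding T_def L.sum eneg1 ..
        also have "\<dots> = T S0 + (\<Sum>S\<in>Pow X - {S0}. T S)" using sum.remove[OF finX S0P] .
        finally have tot: "T S0 = - (\<Sum>S\<in>Pow X - {S0}. T S)" by (simp add: eq_neg_iff_add_eq_0)
        have TS0: "T S0 = e (prod_list w)"
        proof -
          have h1: "S0 \<inter> Od = {}" and h2: "X - S0 - Od = {}" unfolding S0X Od_def by auto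
          have sg0: "sg S0 = 0" unfolding sg_def h1 h2 by simp
          let ?val = "\<lambda>k. if k \<in> S0 \<union> {0, 2*l} then (if odd k then \<rho> (w ! k) else w ! k)
                    else (if odd k then w ! k else \<psi> (w ! k))"
          have "map ?val [0..<2*l+1] = map (nth w) [0..<2*l+1]"
          proof (rule map_cong[OF refl])
            fix k assume k: "k \<in> set [0..<2*l+1]"
            have "k \<in> S0 \<union> {0, 2*l} \<longleftrightarrow> even k" using k unfolding S0X X_def by auto
            then show "?val k = w!k" by simp
          qed
          also have "\<dots> = w" using len map_nth[of w] by simp
          finally show ?thesis unfolding T_def sg0 Col_prod[OF len] by simp
        qed
        have TS: "T S = - ((-1)^(l + card S) * (Maux k \<rho> \<psi> (Col \<rho> \<psi> w S) * e 1))"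
          if S: "S \<in> Pow X - {S0}" for S
        proof -
          have SX: "S \<subseteq> {1..<2*l}" using S X_def by auto
          have Sne: "S \<noteq> {2*i | i. i \<in> {1..l-1}}" using S S0_def by auto
          obtain l' where l': "length (Col \<rho> \<psi> w S) = 2*l'+1" "l' < l"
            "\<forall>i\<le>l'. Col \<rho> \<psi> w S ! (2*i) \<in> B" "\<forall>i\<in>{1..l'}. Col \<rho> \<psi> w S ! (2*i-1) \<in> A"
            using Col_wf[OF len l1 SX Sne wB wA rhoAB psiBA Bm B1 Am] by blast
          have "length (Col \<rho> \<psi> w S) \<le> k" using l' len lk by simp
          then have IH: "e (prod_list (Col \<rho> \<psi> w S)) = Maux k \<rho> \<psi> (Col \<rho> \<psi> w S) * e 1"
            using Suc.IH l' by blast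
          have sgS: "(-1::'c)^(sg S) = - ((-1)^(l + card S))"
            unfolding sg_def Od_def X_def by (rule sign_lemma[OF SX l1])
          show ?thesis unfolding T_def sgS IH by simp
        qed
        have Sdef: "{S. S \<subseteq> {1..2*l-1} \<and> S \<noteq> {2*i | i. i \<in> {1..l-1}}} = Pow X - {S0}"
        proof -
          have I: "{1..2*l-1} = {1..<2*l}" using l1 by auto
          show ?thesis unfolding I S0_def[symmetric] X_def[symmetric] by auto
        qed
        have ld: "length w div 2 = l" using len by simp
        have nl: "\<not> length w \<le> 1" using len l1 by simp
        have "Maux (Suc k) \<rho> \<psi> w = (\<Sum>S\<in>{S. S \<subseteq> {1..2*l-1} \<and> S \<noteq> {2*i | i. i \<in> {1..l-1}}}. (-1)^(l + card S) * Maux k \<rho> \<psi> (Col \<rho> \<psi> w S))"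
          using nl by (simp only: Maux.simps if_False Let_def ld)
        then have "Maux (Suc k) \<rho> \<psi> w = (\<Sum>S\<in>Pow X - {S0}. (-1)^(l + card S) * Maux k \<rho> \<psi> (Col \<rho> \<psi> w S))"
          unfolding Sdef .
        then have "Maux (Suc k) \<rho> \<psi> w * e 1 = (\<Sum>S\<in>Pow X - {S0}. (-1)^(l + card S) * (Maux k \<rho> \<psi> (Col \<rho> \<psi> w S) * e 1))"
          by (simp add: sum_distrib_right mult.assoc)
        also have "\<dots> = - (\<Sum>S\<in>Pow X - {S0}. T S)"
          by (simp add: TS sum_negf)
        finally show ?thesis using tot TS0 by simp
      qed
    qed
  qed
  show ?thesis unfolding moment_def using main assms(11-13) by blast
qed

end
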